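(* Let $(\theta,\varphi)$ be a random dynamical system on $\mathbb{X}=\mathbb{N}_0^L$ as in the context, and let $A:\mathcal{Q}\to\mathcal{P}(\mathbb{X})$ be a $\varphi$-invariant random set with $A_q$ nonempty and finite for all $q$. Then the following are equivalent: (I) $A$ is a weak attractor: for every finite $B\subset\mathbb{X}$, $\mathrm{dist}(\varphi^n_q(B),A_{\theta^nq})\to0$ in probability as $n\to\infty$; (II) $A$ is a forward attractor: for every finite $B\subset\mathbb{X}$, $\lim_{n\to\infty}\mathrm{dist}(\varphi^n_q(B),A_{\theta^nq})=0$ $\mathbb{P}$-a.s.; (III) $A$ is a forward point attractor: the condition in (II) holds for every $B=\{x\}$, $x\in\mathbb{X}$; (IV) $A$ is a weak point attractor: the condition in (I) holds for every $B=\{x\}$, $x\in\mathbb{X}$; (V) for every finite random set $K:\mathcal{Q}\to\mathcal{P}(\mathbb{X})$, $\mathrm{dist}(\varphi^n_q(K_q),A_{\theta^nq})\to0$ in probability as $n\to\infty$.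
   Context: $(\mathcal{Q},\mathcal{F},\mathbb{P})$ is a probability space and $\theta:\mathcal{Q}\to\mathcal{Q}$ is an invertible, measurable, $\mathbb{P}$-preserving and $\mathbb{P}$-ergodic map; $\theta^n$ denotes its iterates ($n\in\mathbb{Z}$). $\varphi:\mathbb{N}_0\times\mathcal{Q}\times\mathbb{X}\to\mathbb{X}$, $(n,q,x)\mapsto\varphi^n_q(x)$, is measurable and satisfies the cocycle property $\varphi^0_q=\mathrm{id}$, $\varphi^{n+m}_q=\varphi^n_{\theta^mq}\circ\varphi^m_q$. $d$ is the Euclidean distance on $\mathbb{X}$, $d(x,B)=\inf_{y\in B}d(x,y)$, and $\mathrm{dist}(A,B)=\sup_{x\in A}d(x,B)$ for nonempty $A,B$. A random set is a map $K:\mathcal{Q}\to\mathcal{P}(\mathbb{X})$ with $q\mapsto d(x,K_q)$ measurable for each $x\in\mathbb{X}$; it is a finite random set if $K_q$ is nonempty and finite for all $q$. A random set $A$ is $\varphi$-invariant if $\varphi^n_q(A_q)=A_{\theta^nq}$ for all $n\in\mathbb{N}$, $\mathbb{P}$-a.s. *)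

theory Defs
  imports "HOL-Probability.Probability"
begin

text \<open>State space X = N_0^L, modelled as functions from a finite index type 'l
  (with L = CARD('l)) to nat.  Euclidean distance on X.\<close>

definition edist :: "('l::finite \<Rightarrow> nat) \<Rightarrow> ('l \<Rightarrow> nat) \<Rightarrow> real" where
  "edist x y = sqrt (\<Sum>i\<in>UNIV. (real (x i) - real (y i))^2)"

definition pdist :: "('l::finite \<Rightarrow> nat) \<Rightarrow> ('l \<Rightarrow> nat) set \<Rightarrow> real" where
  "pdist x B = (INF y\<in>B. edist x y)"

definition hdist :: "('l::finite \<Rightarrow> nat) set \<Rightarrow> ('l \<Rightarrow> nat) set \<Rightarrow> real" where
  "hdist A B = (SUP x\<in>A. pdist x B)"

definition mds :: "'q measure \<Rightarrow> ('q \<Rightarrow> 'q) \<Rightarrow> bool" where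
  "mds M \<theta> \<longleftrightarrow> prob_space M \<and>
     bij_betw \<theta> (space M) (space M) \<and>
     \<theta> \<in> measurable M M \<and> inv_into (space M) \<theta> \<in> measurable M M \<and>
     distr M M \<theta> = M \<and>
     (\<forall>S\<in>sets M. \<theta> -` S \<inter> space M = S \<longrightarrow> measure M S = 0 \<or> measure M S = 1)"

definition cocycle :: "'q measure \<Rightarrow> ('q \<Rightarrow> 'q) \<Rightarrow> (nat \<Rightarrow> 'q \<Rightarrow> ('l::finite \<Rightarrow> nat) \<Rightarrow> ('l \<Rightarrow> nat)) \<Rightarrow> bool" where
  "cocycle M \<theta> \<phi> \<longleftrightarrow>
     (\<lambda>(n, q, x). \<phi> n q x) \<in> measurable (count_space UNIV \<Otimes>\<^sub>M M \<Otimes>\<^sub>M count_space UNIV) (count_space UNIV) \<and>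
     (\<forall>q. \<phi> 0 q = id) \<and>
     (\<forall>n m q. \<phi> (n + m) q = \<phi> n ((\<theta> ^^ m) q) \<circ> \<phi> m q)"

definition random_set :: "'q measure \<Rightarrow> ('q \<Rightarrow> ('l::finite \<Rightarrow> nat) set) \<Rightarrow> bool" where
  "random_set M K \<longleftrightarrow> (\<forall>x. (\<lambda>q. pdist x (K q)) \<in> borel_measurable M)"

definition finite_random_set :: "'q measure \<Rightarrow> ('q \<Rightarrow> ('l::finite \<Rightarrow> nat) set) \<Rightarrow> bool" where
  "finite_random_set M K \<longleftrightarrow> random_set M K \<and> (\<forall>q. K q \<noteq> {} \<and> finite (K q))"

definition invariant_set :: "'q measure \<Rightarrow> ('q \<Rightarrow> 'q) \<Rightarrow> (nat \<Rightarrow> 'q \<Rightarrow> ('l::finite \<Rightarrow> nat) \<Rightarrow> ('l \<Rightarrow> nat)) \<Rightarrow> ('q \<Rightarrow> ('l \<Rightarrow> nat) set) \<Rightarrow> bool" where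
  "invariant_set M \<theta> \<phi> A \<longleftrightarrow> random_set M A \<and>
     (\<forall>n\<ge>1. AE q in M. \<phi> n q ` A q = A ((\<theta> ^^ n) q))"

definition tendsto0_in_prob :: "'q measure \<Rightarrow> (nat \<Rightarrow> 'q \<Rightarrow> real) \<Rightarrow> bool" where
  "tendsto0_in_prob M X \<longleftrightarrow>
     (\<forall>\<epsilon>>0. (\<lambda>n. measure M {q\<in>space M. \<bar>X n q\<bar> > \<epsilon>}) \<longlonglongrightarrow> 0)"

definition tendsto0_AE :: "'q measure \<Rightarrow> (nat \<Rightarrow> 'q \<Rightarrow> real) \<Rightarrow> bool" where
  "tendsto0_AE M X \<longleftrightarrow> (AE q in M. (\<lambda>n. X n q) \<longlonglongrightarrow> 0)"

end

theory Submission
  imports Defs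
begin

lemma edist_ge1:
  fixes x y :: "'l::finite \<Rightarrow> nat"
  assumes "x \<noteq> y" shows "edist x y \<ge> 1"
proof -
  obtain i where i: "x i \<noteq> y i" using assms by auto
  have "1 \<le> (real (x i) - real (y i))^2"
  proof -
    have "\<bar>real (x i) - real (y i)\<bar> \<ge> 1" using i by linarith
    then show ?thesis by (metis abs_le_square_iff abs_one power_one)
  qed
  also have "\<dots> \<le> (\<Sum>j\<in>UNIV. (real (x j) - real (y j))^2)"
    by (rule member_le_sum) auto
  finally show ?thesis unfolding edist_def by simp
qed

lemma edist_nonneg: "edist x y \<ge> 0" unfolding edist_def by (simp add: sum_nonneg)

lemma edist_self: "edist x x = 0" unfolding edist_def by simp

lemma pdist_in:
  assumes "finite B" "x \<in> B" shows "pdist x B = 0"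
proof -
  have bdd: "bdd_below ((\<lambda>y. edist x y) ` B)"
    by (rule bdd_belowI[where m=0]) (auto simp: edist_nonneg)
  have "pdist x B \<le> edist x x" unfolding pdist_def
    by (rule cINF_lower[OF bdd assms(2)])
  moreover have "pdist x B \<ge> 0" unfolding pdist_def
    using assms(2) by (intro cINF_greatest) (auto simp: edist_nonneg)
  ultimately show ?thesis by (simp add: edist_self)
qed

lemma pdist_out:
  assumes "B \<noteq> {}" "x \<notin> B" shows "pdist x B \<ge> 1"
  unfolding pdist_def
proof (rule cINF_greatest[OF assms(1)])
  fix y assume "y \<in> B" then have "x \<noteq> y" using assms by blast
  then show "1 \<le> edist x y" by (rule edist_ge1)
qed

lemma hdist_sub:
  assumes "finite S" "S \<noteq> {}" "finite T" "S \<subseteq> T" shows "hdist S T = 0"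
proof -
  have "\<And>x. x \<in> S \<Longrightarrow> pdist x T = 0" using assms pdist_in by blast
  then have "hdist S T = (SUP x\<in>S. (0::real))" unfolding hdist_def
    by (rule SUP_cong[OF refl])
  then show ?thesis using assms(2) by simp
qed

lemma hdist_nsub:
  assumes "finite S" "T \<noteq> {}" "\<not> S \<subseteq> T" shows "hdist S T \<ge> 1"
proof -
  obtain x where x: "x \<in> S" "x \<notin> T" using assms by auto
  have "1 \<le> pdist x T" using pdist_out assms x by blast
  also have "\<dots> \<le> hdist S T" unfolding hdist_def
    by (rule cSUP_upper[OF x(1)]) (rule bdd_above_finite, rule finite_imageI, fact)
  finally show ?thesis .
qed

lemma pdist_zero_iff:
  assumes "finite B" "B \<noteq> {}" shows "pdist x B = 0 \<longleftrightarrow> x \<in> B"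
proof
  assume "pdist x B = 0" then show "x \<in> B" using pdist_out[OF assms(2), of x] by linarith
qed (rule pdist_in[OF assms(1)])

lemma funpow_meas: "\<theta> \<in> M \<rightarrow>\<^sub>M M \<Longrightarrow> (\<theta> ^^ n) \<in> M \<rightarrow>\<^sub>M M"
  by (induction n) (auto simp: measurable_ident)

lemma phi_meas:
  assumes "cocycle M \<theta> \<phi>" shows "(\<lambda>q. \<phi> n q x) \<in> M \<rightarrow>\<^sub>M count_space UNIV"
proof -
  have h: "(\<lambda>(n, q, x). \<phi> n q x) \<in> count_space UNIV \<Otimes>\<^sub>M M \<Otimes>\<^sub>M count_space UNIV \<rightarrow>\<^sub>M count_space UNIV"
    using assms unfolding cocycle_def by blast
  have p: "(\<lambda>q. (n, q, x)) \<in> M \<rightarrow>\<^sub>M (count_space UNIV \<Otimes>\<^sub>M M \<Otimes>\<^sub>M count_space UNIV)"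
    by measurable
  from measurable_comp[OF p h] show ?thesis by (simp add: comp_def)
qed

lemma mem_pred:
  assumes "random_set M A" "\<forall>q. A q \<noteq> {} \<and> finite (A q)"
  shows "Measurable.pred M (\<lambda>q. y \<in> A q)"
proof -
  have f: "(\<lambda>q. pdist y (A q)) \<in> borel_measurable M" using assms(1) unfolding random_set_def by blast
  have "{q\<in>space M. y \<in> A q} = (\<lambda>q. pdist y (A q)) -` {0} \<inter> space M"
    using assms(2) pdist_zero_iff by fastforce
  also have "\<dots> \<in> sets M" by (rule measurable_sets[OF f]) simp
  finally show ?thesis unfolding pred_def .
qed

lemma img_pred:
  fixes \<phi> :: "nat \<Rightarrow> 'q \<Rightarrow> ('l::finite \<Rightarrow> nat) \<Rightarrow> ('l \<Rightarrow> nat)"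
  assumes "cocycle M \<theta> \<phi>" "\<theta> \<in> M \<rightarrow>\<^sub>M M" "random_set M A" "\<forall>q. A q \<noteq> {} \<and> finite (A q)"
    and K: "\<And>x. Measurable.pred M (\<lambda>q. x \<in> K q)"
  shows "{q\<in>space M. \<not> \<phi> n q ` K q \<subseteq> A ((\<theta> ^^ n) q)} \<in> sets M"
proof -
  have a: "Measurable.pred M (\<lambda>q. y \<in> A ((\<theta> ^^ n) q))" for y
    using mem_pred[OF assms(3,4), of y] funpow_meas[OF assms(2), of n]
    unfolding pred_def by (rule pred_sets1[unfolded pred_def])
  have b: "Measurable.pred M (\<lambda>q. \<phi> n q x \<in> A ((\<theta> ^^ n) q))" for x
    by (rule measurable_compose_countable[where f="\<lambda>y q. y \<in> A ((\<theta> ^^ n) q)", OF a phi_meas[OF assms(1)]])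
  have "Measurable.pred M (\<lambda>q. \<not> (\<forall>x. x \<in> K q \<longrightarrow> \<phi> n q x \<in> A ((\<theta> ^^ n) q)))"
    using b K by measurable
  then have "Measurable.pred M (\<lambda>q. \<not> \<phi> n q ` K q \<subseteq> A ((\<theta> ^^ n) q))"
    by (simp add: image_subset_iff Bex_def)
  then show ?thesis unfolding pred_def .
qed

lemma ae_char:
  assumes "\<forall>n q. P n q \<longrightarrow> X n q = 0" "\<forall>n q. \<not> P n q \<longrightarrow> X n q \<ge> 1"
  shows "tendsto0_AE M X \<longleftrightarrow> (AE q in M. eventually (\<lambda>n. P n q) sequentially)"
  unfolding tendsto0_AE_def
proof (rule AE_cong)
  fix q
  show "(\<lambda>n. X n q) \<longlonglongrightarrow> 0 \<longleftrightarrow> eventually (\<lambda>n. P n q) sequentially"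
  proof
    assume "(\<lambda>n. X n q) \<longlonglongrightarrow> 0"
    then have "eventually (\<lambda>n. X n q < 1) sequentially" by (rule order_tendstoD) simp
    then show "eventually (\<lambda>n. P n q) sequentially"
      by (rule eventually_mono) (use assms in force)
  next
    assume "eventually (\<lambda>n. P n q) sequentially"
    then have "eventually (\<lambda>n. X n q = 0) sequentially"
      by (rule eventually_mono) (use assms in force)
    then show "(\<lambda>n. X n q) \<longlonglongrightarrow> 0" by (rule tendsto_eventually)
  qed
qed

lemma prob_char:
  assumes "\<forall>n q. P n q \<longrightarrow> X n q = 0" "\<forall>n q. \<not> P n q \<longrightarrow> X n q \<ge> 1"
    and "prob_space M" and S: "\<forall>n. {q\<in>space M. \<not> P n q} \<in> sets M"
  shows "tendsto0_in_prob M X \<longleftrightarrow> (\<lambda>n. measure M {q\<in>space M. \<not> P n q}) \<longlonglongrightarrow> 0"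
  unfolding tendsto0_in_prob_def
proof
  assume a: "\<forall>\<epsilon>>0. (\<lambda>n. measure M {q \<in> space M. \<epsilon> < \<bar>X n q\<bar>}) \<longlonglongrightarrow> 0"
  have h: "(\<lambda>n. measure M {q \<in> space M. 1/2 < \<bar>X n q\<bar>}) \<longlonglongrightarrow> 0"
    using spec[OF a, of "1/2"] by simp
  have "{q \<in> space M. 1/2 < \<bar>X n q\<bar>} = {q\<in>space M. \<not> P n q}" for n
    using assms(1,2) by force
  with h show "(\<lambda>n. measure M {q\<in>space M. \<not> P n q}) \<longlonglongrightarrow> 0" by simp
next
  assume h: "(\<lambda>n. measure M {q\<in>space M. \<not> P n q}) \<longlonglongrightarrow> 0"
  interpret prob_space M by fact
  show "\<forall>\<epsilon>>0. (\<lambda>n. measure M {q \<in> space M. \<epsilon> < \<bar>X n q\<bar>}) \<longlonglongrightarrow> 0"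
  proof (intro allI impI)
    fix \<epsilon> :: real assume "\<epsilon> > 0"
    have "{q \<in> space M. \<epsilon> < \<bar>X n q\<bar>} \<subseteq> {q\<in>space M. \<not> P n q}" for n
      using assms(1) \<open>\<epsilon> > 0\<close> by force
    then have le: "measure M {q \<in> space M. \<epsilon> < \<bar>X n q\<bar>} \<le> measure M {q\<in>space M. \<not> P n q}" for n
      using S by (intro finite_measure_mono) auto
    show "(\<lambda>n. measure M {q \<in> space M. \<epsilon> < \<bar>X n q\<bar>}) \<longlonglongrightarrow> 0"
      by (rule tendsto_sandwich[OF _ _ tendsto_const h]) (simp_all add: le)
  qed
qed

lemma ae_to_prob:
  assumes "prob_space M" and S: "\<forall>n. {q\<in>space M. \<not> P n q} \<in> sets M"
    and ae: "AE q in M. eventually (\<lambda>n. P n q) sequentially"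
  shows "(\<lambda>n. measure M {q\<in>space M. \<not> P n q}) \<longlonglongrightarrow> 0"
proof -
  interpret prob_space M by fact
  define W where "W n = space M - (\<Union>m\<in>{n..}. {q\<in>space M. \<not> P m q})" for n
  have Wm: "W n \<in> sets M" for n unfolding W_def using S by auto
  have inc: "incseq W" unfolding W_def incseq_def by auto
  have "AE q in M. q \<in> (\<Union>n. W n)"
    using ae AE_space by eventually_elim (auto simp: W_def eventually_sequentially)
  then have "measure M (\<Union>n. W n) = 1" using Wm by (subst prob_eq_1) auto
  moreover have "(\<lambda>n. measure M (W n)) \<longlonglongrightarrow> measure M (\<Union>n. W n)"
    using Wm inc by (intro Lim_measure_incseq) auto
  ultimately have "(\<lambda>n. 1 - measure M (W n)) \<longlonglongrightarrow> 1 - 1"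
    by (intro tendsto_diff) auto
  then have t: "(\<lambda>n. 1 - measure M (W n)) \<longlonglongrightarrow> 0" by simp
  have "measure M {q\<in>space M. \<not> P n q} \<le> measure M (space M - W n)" for n
    using Wm by (intro finite_measure_mono) (auto simp: W_def)
  also have "measure M (space M - W n) = 1 - measure M (W n)" for n
    using Wm prob_compl by auto
  finally have le: "measure M {q\<in>space M. \<not> P n q} \<le> 1 - measure M (W n)" for n .
  show ?thesis
    by (rule tendsto_sandwich[OF _ _ tendsto_const t]) (simp_all add: le)
qed

lemma prob_to_ae_mono:
  assumes "prob_space M" and S: "\<forall>n. {q\<in>space M. \<not> P n q} \<in> sets M"
    and mono: "AE q in M. \<forall>n. P n q \<longrightarrow> P (Suc n) q"
    and lim: "(\<lambda>n. measure M {q\<in>space M. \<not> P n q}) \<longlonglongrightarrow> 0"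
  shows "AE q in M. eventually (\<lambda>n. P n q) sequentially"
proof -
  interpret prob_space M by fact
  define W where "W n = (\<Union>m\<in>{..n}. space M - {q\<in>space M. \<not> P m q})" for n
  have Wm: "W n \<in> sets M" for n unfolding W_def using S by auto
  have inc: "incseq W" unfolding W_def incseq_def by auto
  have "measure M (space M - {q\<in>space M. \<not> P n q}) \<le> measure M (W n)" for n
    using Wm by (intro finite_measure_mono) (auto simp: W_def)
  moreover have "measure M (space M - {q\<in>space M. \<not> P n q}) = 1 - measure M {q\<in>space M. \<not> P n q}" for n
    using S prob_compl by auto
  ultimately have le: "1 - measure M {q\<in>space M. \<not> P n q} \<le> measure M (W n)" for n by simp
  have "(\<lambda>n. 1 - measure M {q\<in>space M. \<not> P n q}) \<longlonglongrightarrow> 1 - 0"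
    by (intro tendsto_diff lim tendsto_const)
  then have t0: "(\<lambda>n. 1 - measure M {q\<in>space M. \<not> P n q}) \<longlonglongrightarrow> 1" by simp
  have t1: "(\<lambda>n. measure M (W n)) \<longlonglongrightarrow> 1"
    by (rule tendsto_sandwich[OF always_eventually always_eventually t0 tendsto_const]) (auto intro: le)
  moreover have "(\<lambda>n. measure M (W n)) \<longlonglongrightarrow> measure M (\<Union>n. W n)"
    using Wm inc by (intro Lim_measure_incseq) auto
  ultimately have "measure M (\<Union>n. W n) = 1" using LIMSEQ_unique by metis
  then have "AE q in M. q \<in> (\<Union>n. W n)" by (rule AE_prob_1)
  then show ?thesis using mono
  proof eventually_elim
    case (elim q)
    then obtain m where m: "P m q" by (auto simp: W_def)
    have "P k q" if "m \<le> k" for k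
      using that
    proof (induction k rule: dec_induct)
      case base then show ?case by (fact m)
    next
      case (step k) then show ?case using elim by blast
    qed
    then show ?case by (auto simp: eventually_sequentially)
  qed
qed


lemma AE_shift:
  assumes th: "\<theta> \<in> M \<rightarrow>\<^sub>M M" and d: "distr M M \<theta> = M" and ae: "AE q in M. Pr q"
  shows "AE q in M. Pr ((\<theta> ^^ n) q)"
proof (induction n)
  case 0 then show ?case using ae by simp
next
  case (Suc n)
  then have "AE q in distr M M \<theta>. Pr ((\<theta> ^^ n) q)" unfolding d .
  from AE_distrD[OF th this] show ?case by (simp add: funpow_Suc_right del: funpow.simps)
qed

theorem theorem4p3:
  fixes M :: "'q measure" and \<theta> :: "'q \<Rightarrow> 'q"
    and \<phi> :: "nat \<Rightarrow> 'q \<Rightarrow> ('l::finite \<Rightarrow> nat) \<Rightarrow> ('l \<Rightarrow> nat)"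
    and A :: "'q \<Rightarrow> ('l \<Rightarrow> nat) set"
  assumes "mds M \<theta>"
    and "cocycle M \<theta> \<phi>"
    and "invariant_set M \<theta> \<phi> A"
    and "\<forall>q. A q \<noteq> {} \<and> finite (A q)"
  defines "I \<equiv> \<forall>B. finite B \<and> B \<noteq> {} \<longrightarrow>
              tendsto0_in_prob M (\<lambda>n q. hdist (\<phi> n q ` B) (A ((\<theta> ^^ n) q)))"
    and "II \<equiv> \<forall>B. finite B \<and> B \<noteq> {} \<longrightarrow>
              tendsto0_AE M (\<lambda>n q. hdist (\<phi> n q ` B) (A ((\<theta> ^^ n) q)))"
    and "III \<equiv> \<forall>x. tendsto0_AE M (\<lambda>n q. hdist (\<phi> n q ` {x}) (A ((\<theta> ^^ n) q)))"
    and "IV \<equiv> \<forall>x. tendsto0_in_prob M (\<lambda>n q. hdist (\<phi> n q ` {x}) (A ((\<theta> ^^ n) q)))"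
    and "V \<equiv> \<forall>K. finite_random_set M K \<longrightarrow>
              tendsto0_in_prob M (\<lambda>n q. hdist (\<phi> n q ` K q) (A ((\<theta> ^^ n) q)))"
  shows "(I \<longleftrightarrow> II) \<and> (II \<longleftrightarrow> III) \<and> (III \<longleftrightarrow> IV) \<and> (IV \<longleftrightarrow> V)"
proof -
  note mds = assms(1)[unfolded mds_def]
  have ps: "prob_space M" using mds by blast
  have th: "\<theta> \<in> M \<rightarrow>\<^sub>M M" using mds by blast
  have d: "distr M M \<theta> = M" using mds by blast
  have rA: "random_set M A" using assms(3) unfolding invariant_set_def by blast
  have Afin: "\<forall>q. A q \<noteq> {} \<and> finite (A q)" by fact
  have coc: "\<forall>n m q. \<phi> (n + m) q = \<phi> n ((\<theta> ^^ m) q) \<circ> \<phi> m q"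
    using assms(2) unfolding cocycle_def by blast
  have gK: "(tendsto0_AE M (\<lambda>n q. hdist (\<phi> n q ` K q) (A ((\<theta> ^^ n) q))) \<longleftrightarrow>
       (AE q in M. eventually (\<lambda>n. \<phi> n q ` K q \<subseteq> A ((\<theta> ^^ n) q)) sequentially)) \<and>
     (tendsto0_in_prob M (\<lambda>n q. hdist (\<phi> n q ` K q) (A ((\<theta> ^^ n) q))) \<longleftrightarrow>
       (\<lambda>n. measure M {q\<in>space M. \<not> \<phi> n q ` K q \<subseteq> A ((\<theta> ^^ n) q)}) \<longlonglongrightarrow> 0)"
    if Kf: "\<forall>q. K q \<noteq> {} \<and> finite (K q)" and Km: "\<And>x. Measurable.pred M (\<lambda>q. x \<in> K q)" for K
  proof -
    have h1: "\<forall>n q. \<phi> n q ` K q \<subseteq> A ((\<theta> ^^ n) q) \<longrightarrow> hdist (\<phi> n q ` K q) (A ((\<theta> ^^ n) q)) = 0"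
      using Kf Afin by (auto intro: hdist_sub)
    have h2: "\<forall>n q. \<not> \<phi> n q ` K q \<subseteq> A ((\<theta> ^^ n) q) \<longrightarrow> hdist (\<phi> n q ` K q) (A ((\<theta> ^^ n) q)) \<ge> 1"
      by (intro allI impI hdist_nsub) (use Kf Afin in auto)
    have S: "\<forall>n. {q\<in>space M. \<not> \<phi> n q ` K q \<subseteq> A ((\<theta> ^^ n) q)} \<in> sets M"
      using img_pred[OF assms(2) th rA Afin Km] by blast
    show ?thesis
      using ae_char[OF h1 h2, of M] prob_char[OF h1 h2 ps S] by blast
  qed
  have gB: "(tendsto0_AE M (\<lambda>n q. hdist (\<phi> n q ` B) (A ((\<theta> ^^ n) q))) \<longleftrightarrow>
       (AE q in M. eventually (\<lambda>n. \<phi> n q ` B \<subseteq> A ((\<theta> ^^ n) q)) sequentially)) \<and>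
     (tendsto0_in_prob M (\<lambda>n q. hdist (\<phi> n q ` B) (A ((\<theta> ^^ n) q))) \<longleftrightarrow>
       (\<lambda>n. measure M {q\<in>space M. \<not> \<phi> n q ` B \<subseteq> A ((\<theta> ^^ n) q)}) \<longlonglongrightarrow> 0)"
    if "finite B" "B \<noteq> {}" for B
    using gK[of "\<lambda>_. B"] that by simp
  have gx: "(tendsto0_AE M (\<lambda>n q. hdist (\<phi> n q ` {x}) (A ((\<theta> ^^ n) q))) \<longleftrightarrow>
       (AE q in M. eventually (\<lambda>n. \<phi> n q x \<in> A ((\<theta> ^^ n) q)) sequentially)) \<and>
     (tendsto0_in_prob M (\<lambda>n q. hdist (\<phi> n q ` {x}) (A ((\<theta> ^^ n) q))) \<longleftrightarrow>
       (\<lambda>n. measure M {q\<in>space M. \<not> \<phi> n q x \<in> A ((\<theta> ^^ n) q)}) \<longlonglongrightarrow> 0)" for x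
    using gB[of "{x}"] by simp
  have Sx: "\<forall>n. {q\<in>space M. \<not> \<phi> n q x \<in> A ((\<theta> ^^ n) q)} \<in> sets M" for x
    using img_pred[OF assms(2) th rA Afin, of "\<lambda>_. {x}"] by simp
  have inv1: "AE q in M. \<phi> 1 q ` A q = A ((\<theta> ^^ 1) q)"
    using assms(3) unfolding invariant_set_def by blast
  have invall: "AE q in M. \<forall>n. \<phi> 1 ((\<theta> ^^ n) q) ` A ((\<theta> ^^ n) q) = A ((\<theta> ^^ 1) ((\<theta> ^^ n) q))"
    using AE_shift[OF th d inv1] by (simp add: AE_all_countable)
  have monox: "AE q in M. \<forall>n. \<phi> n q x \<in> A ((\<theta> ^^ n) q) \<longrightarrow> \<phi> (Suc n) q x \<in> A ((\<theta> ^^ (Suc n)) q)" for x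
    using invall
  proof eventually_elim
    case (elim q)
    show ?case
    proof (intro allI impI)
      fix n assume a: "\<phi> n q x \<in> A ((\<theta> ^^ n) q)"
      have "\<phi> (Suc n) q x = \<phi> 1 ((\<theta> ^^ n) q) (\<phi> n q x)"
        using coc[rule_format, of 1 n q] by simp
      also have "\<dots> \<in> \<phi> 1 ((\<theta> ^^ n) q) ` A ((\<theta> ^^ n) q)" using a by blast
      also have "\<dots> = A ((\<theta> ^^ (Suc n)) q)" using elim[rule_format, of n] by simp
      finally show "\<phi> (Suc n) q x \<in> A ((\<theta> ^^ (Suc n)) q)" .
    qed
  qed
  have I_IV: "I \<Longrightarrow> IV" unfolding I_def IV_def by blast
  have IV_III: "IV \<Longrightarrow> III" unfolding IV_def III_def
  proof (intro allI impI)
    fix x assume "\<forall>x. tendsto0_in_prob M (\<lambda>n q. hdist (\<phi> n q ` {x}) (A ((\<theta> ^^ n) q)))"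
    then have "(\<lambda>n. measure M {q\<in>space M. \<not> \<phi> n q x \<in> A ((\<theta> ^^ n) q)}) \<longlonglongrightarrow> 0"
      using gx by blast
    from prob_to_ae_mono[OF ps Sx monox this] show "tendsto0_AE M (\<lambda>n q. hdist (\<phi> n q ` {x}) (A ((\<theta> ^^ n) q)))"
      using gx by blast
  qed
  have strong: "AE q in M. eventually (\<lambda>n. \<phi> n q ` K q \<subseteq> A ((\<theta> ^^ n) q)) sequentially"
    if III and Kf: "\<forall>q. finite (K q)" for K :: "'q \<Rightarrow> ('l \<Rightarrow> nat) set"
  proof -
    have "AE q in M. eventually (\<lambda>n. \<phi> n q x \<in> A ((\<theta> ^^ n) q)) sequentially" for x
      using that(1) gx unfolding III_def by blast
    then have "AE q in M. \<forall>x. eventually (\<lambda>n. \<phi> n q x \<in> A ((\<theta> ^^ n) q)) sequentially"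
      by (simp add: AE_all_countable)
    then show ?thesis
    proof eventually_elim
      case (elim q)
      then have "eventually (\<lambda>n. \<forall>x\<in>K q. \<phi> n q x \<in> A ((\<theta> ^^ n) q)) sequentially"
        using Kf by (intro eventually_ball_finite) auto
      then show ?case by (simp add: image_subset_iff)
    qed
  qed
  have III_II: "III \<Longrightarrow> II" unfolding II_def
  proof (intro allI impI)
    fix B :: "('l \<Rightarrow> nat) set" assume "III" "finite B \<and> B \<noteq> {}"
    then show "tendsto0_AE M (\<lambda>n q. hdist (\<phi> n q ` B) (A ((\<theta> ^^ n) q)))"
      using gB strong[of "\<lambda>_. B"] by simp
  qed
  have II_III: "II \<Longrightarrow> III" unfolding II_def III_def by blast
  have III_V: "III \<Longrightarrow> V" unfolding V_def
  proof (intro allI impI)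
    fix K :: "'q \<Rightarrow> ('l \<Rightarrow> nat) set" assume "III" "finite_random_set M K"
    then have Kf: "\<forall>q. K q \<noteq> {} \<and> finite (K q)" and rK: "random_set M K"
      unfolding finite_random_set_def by auto
    have Km: "Measurable.pred M (\<lambda>q. x \<in> K q)" for x by (rule mem_pred[OF rK Kf])
    have S: "\<forall>n. {q\<in>space M. \<not> \<phi> n q ` K q \<subseteq> A ((\<theta> ^^ n) q)} \<in> sets M"
      using img_pred[OF assms(2) th rA Afin Km] by blast
    have "AE q in M. eventually (\<lambda>n. \<phi> n q ` K q \<subseteq> A ((\<theta> ^^ n) q)) sequentially"
      using strong \<open>III\<close> Kf by blast
    from ae_to_prob[OF ps S this]
    show "tendsto0_in_prob M (\<lambda>n q. hdist (\<phi> n q ` K q) (A ((\<theta> ^^ n) q)))"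
      using gK[OF Kf Km] by blast
  qed
  have V_I: "V \<Longrightarrow> I" unfolding V_def I_def
  proof (intro allI impI)
    fix B :: "('l \<Rightarrow> nat) set"
    assume V: "\<forall>K. finite_random_set M K \<longrightarrow>
              tendsto0_in_prob M (\<lambda>n q. hdist (\<phi> n q ` K q) (A ((\<theta> ^^ n) q)))"
      and B: "finite B \<and> B \<noteq> {}"
    have "finite_random_set M (\<lambda>_. B)"
      unfolding finite_random_set_def random_set_def using B by simp
    with V show "tendsto0_in_prob M (\<lambda>n q. hdist (\<phi> n q ` B) (A ((\<theta> ^^ n) q)))" by blast
  qed
  show ?thesis using I_IV IV_III III_II II_III III_V V_I by blast
qed

end
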